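(* Let $J$ and $J'$ be intervals and let $s,s':J\to J'$ be two shrinkings. Then $s$ and $s'$ are homotopic relative to $\partial J$; that is, the category whose objects are intervals and whose morphisms are shrinkings modulo homotopy relative to $\partial J$ is a poset.
   Context: A digraph has a vertex set and arrows $E\subseteq V\times V$ containing the diagonal; digraph maps preserve arrows. An interval is a digraph $J$ with vertices $\{0,\dots,k\}$ whose non-degenerate arrows are, for each $0\le i<k$, exactly one of $i\to i+1$ or $i+1\to i$; $\partial J=\{0,k\}$. A shrinking is a digraph map between intervals that is surjective and monotone on vertices. Two digraph maps $\varphi,\psi:J\to J'$ with $\varphi|_{\partial J}=\psi|_{\partial J}$ are homotopic relative to $\partial J$ if there is a finite chain of digraph maps $\varphi=\varphi_0,\dots,\varphi_r=\psi$, all agreeing on $\partial J$, such that for each $t$ either $\varphi_t(x)\to\varphi_{t+1}(x)$ for all vertices $x$, or $\varphi_{t+1}(x)\to\varphi_t(x)$ for all $x$. *)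

theory Defs
  imports Main
begin

text \<open>A digraph is a pair (V, E) with E a set of arrows (assumed to contain the diagonal).\<close>
type_synonym 'a digraph = "'a set \<times> ('a \<times> 'a) set"

definition digraph_map :: "'a digraph \<Rightarrow> 'b digraph \<Rightarrow> ('a \<Rightarrow> 'b) \<Rightarrow> bool" where
  "digraph_map G H f \<longleftrightarrow>
     (\<forall>x\<in>fst G. f x \<in> fst H) \<and> (\<forall>(x, y)\<in>snd G. (f x, f y) \<in> snd H)"

text \<open>The interval with vertices 0..k; for i < k, d i = True means the arrow i -> i+1,
  d i = False means the arrow i+1 -> i. Values of d at i >= k are irrelevant.\<close>
definition interval :: "nat \<Rightarrow> (nat \<Rightarrow> bool) \<Rightarrow> nat digraph" where
  "interval k d =
     ({0..k},
      {(x, y). x \<le> k \<and> y \<le> k \<and>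
         (x = y \<or> (x < k \<and> y = Suc x \<and> d x) \<or> (y < k \<and> x = Suc y \<and> \<not> d y))})"

definition interval_boundary :: "nat \<Rightarrow> nat set" where
  "interval_boundary k = {0, k}"

definition shrinking :: "nat \<Rightarrow> (nat \<Rightarrow> bool) \<Rightarrow> nat \<Rightarrow> (nat \<Rightarrow> bool) \<Rightarrow> (nat \<Rightarrow> nat) \<Rightarrow> bool" where
  "shrinking k d k' d' s \<longleftrightarrow>
     digraph_map (interval k d) (interval k' d') s \<and>
     s ` {0..k} = {0..k'} \<and> mono_on {0..k} s"

definition homotopic_rel_boundary ::
  "nat \<Rightarrow> (nat \<Rightarrow> bool) \<Rightarrow> nat \<Rightarrow> (nat \<Rightarrow> bool) \<Rightarrow> (nat \<Rightarrow> nat) \<Rightarrow> (nat \<Rightarrow> nat) \<Rightarrow> bool" where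
  "homotopic_rel_boundary k d k' d' \<phi> \<psi> \<longleftrightarrow>
     (\<forall>x\<in>interval_boundary k. \<phi> x = \<psi> x) \<and>
     (\<exists>(fs :: nat \<Rightarrow> nat \<Rightarrow> nat) r. fs 0 = \<phi> \<and> fs r = \<psi> \<and>
        (\<forall>t\<le>r. digraph_map (interval k d) (interval k' d') (fs t) \<and>
                (\<forall>x\<in>interval_boundary k. fs t x = \<phi> x)) \<and>
        (\<forall>t<r. (\<forall>x\<in>{0..k}. (fs t x, fs (Suc t) x) \<in> snd (interval k' d')) \<or>
               (\<forall>x\<in>{0..k}. (fs (Suc t) x, fs t x) \<in> snd (interval k' d'))))"

end

theory Submission
  imports Defs
begin

definition good :: "nat \<Rightarrow> (nat \<Rightarrow> bool) \<Rightarrow> nat \<Rightarrow> (nat \<Rightarrow> bool) \<Rightarrow> (nat \<Rightarrow> nat) \<Rightarrow> bool" where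
  "good k d k' d' f \<longleftrightarrow> (\<forall>x\<le>k. f x \<le> k') \<and>
     (\<forall>x<k. f (Suc x) = f x \<or> (f (Suc x) = Suc (f x) \<and> d x = d' (f x)))"

lemma edge_iff: "(a, b) \<in> snd (interval k d) \<longleftrightarrow> a \<le> k \<and> b \<le> k \<and>
   (a = b \<or> (a < k \<and> b = Suc a \<and> d a) \<or> (b < k \<and> a = Suc b \<and> \<not> d b))"
  by (simp add: interval_def)

lemma good_dm:
  assumes "good k d k' d' f"
  shows "digraph_map (interval k d) (interval k' d') f"
proof -
  have A: "\<forall>x\<le>k. f x \<le> k'" and B: "\<forall>x<k. f (Suc x) = f x \<or> (f (Suc x) = Suc (f x) \<and> d x = d' (f x))"
    using assms by (auto simp: good_def)
  show ?thesis
    unfolding digraph_map_def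
  proof (intro conjI ballI)
    fix x assume "x \<in> fst (interval k d)"
    then show "f x \<in> fst (interval k' d')" using A by (auto simp: interval_def)
  next
    fix p assume p: "p \<in> snd (interval k d)"
    obtain x y where xy: "p = (x, y)" by (cases p)
    have "(f x, f y) \<in> snd (interval k' d')"
    proof -
      from p xy have e: "x \<le> k" "y \<le> k" "x = y \<or> (x < k \<and> y = Suc x \<and> d x) \<or> (y < k \<and> x = Suc y \<and> \<not> d y)"
        by (auto simp: edge_iff)
      have fx: "f x \<le> k'" "f y \<le> k'" using A e by auto
      from e(3) show ?thesis
      proof (elim disjE conjE)
        assume "x = y" then show ?thesis using fx by (simp add: edge_iff)
      next
        assume h: "x < k" "y = Suc x" "d x"
        then show ?thesis using B fx by (auto simp: edge_iff)
      next
        assume h: "y < k" "x = Suc y" "\<not> d y"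
        then show ?thesis using B fx by (auto simp: edge_iff)
      qed
    qed
    then show "case p of (x, y) \<Rightarrow> (f x, f y) \<in> snd (interval k' d')" using xy by simp
  qed
qed

lemma shr_good:
  assumes "shrinking k d k' d' s"
  shows "good k d k' d' s"
proof -
  have dm: "digraph_map (interval k d) (interval k' d') s" and mo: "mono_on {0..k} s"
    using assms by (auto simp: shrinking_def)
  have A: "\<forall>x\<le>k. s x \<le> k'" using dm by (auto simp: digraph_map_def interval_def)
  have B: "s (Suc x) = s x \<or> (s (Suc x) = Suc (s x) \<and> d x = d' (s x))" if x: "x < k" for x
  proof -
    have le: "s x \<le> s (Suc x)" using mo x by (auto intro: mono_onD)
    show ?thesis
    proof (cases "d x")
      case True
      then have "(x, Suc x) \<in> snd (interval k d)" using x by (simp add: edge_iff)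
      then have "(s x, s (Suc x)) \<in> snd (interval k' d')" using dm by (auto simp: digraph_map_def)
      then show ?thesis using le True by (auto simp: edge_iff)
    next
      case False
      then have "(Suc x, x) \<in> snd (interval k d)" using x by (simp add: edge_iff)
      then have "(s (Suc x), s x) \<in> snd (interval k' d')" using dm by (auto simp: digraph_map_def)
      then show ?thesis using le False by (auto simp: edge_iff)
    qed
  qed
  show ?thesis using A B by (simp add: good_def)
qed

lemma shr_bd:
  assumes "shrinking k d k' d' s"
  shows "s 0 = 0" "s k = k'"
proof -
  have im: "s ` {0..k} = {0..k'}" and mo: "mono_on {0..k} s"
    using assms by (auto simp: shrinking_def)
  have "0 \<in> s ` {0..k}" using im by auto
  then obtain x where "x \<le> k" "s x = 0" by auto
  then have "s 0 \<le> s x" using mo by (intro mono_onD[OF mo]) auto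
  then show "s 0 = 0" using \<open>s x = 0\<close> by simp
  have "k' \<in> s ` {0..k}" using im by auto
  then obtain y where "y \<le> k" "s y = k'" by auto
  then have "s y \<le> s k" by (intro mono_onD[OF mo]) auto
  moreover have "s k \<le> k'" using im by auto
  ultimately show "s k = k'" using \<open>s y = k'\<close> by simp
qed

lemma good_max:
  assumes "good k d k' d' f" "good k d k' d' g"
  shows "good k d k' d' (\<lambda>x. max (f x) (g x))"
  using assms unfolding good_def
  by (smt (verit) max.absorb1 max.absorb2 max_def not_less_eq_eq le_SucI)

lemma good_min:
  assumes "good k d k' d' f" "good k d k' d' g"
  shows "good k d k' d' (\<lambda>x. min (f x) (g x))"
  using assms unfolding good_def
  by (smt (verit) min.absorb1 min.absorb2 min_def not_less_eq_eq le_SucI)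

lemma good_const: "c \<le> k' \<Longrightarrow> good k d k' d' (\<lambda>x. c)"
  by (simp add: good_def)

lemma step_up:
  assumes "\<forall>x\<le>k. f x \<le> k' \<and> g x \<le> k' \<and> (g x = f x \<or> (f x = c \<and> g x = Suc c))"
  shows "(\<forall>x\<in>{0..k}. (f x, g x) \<in> snd (interval k' d')) \<or>
         (\<forall>x\<in>{0..k}. (g x, f x) \<in> snd (interval k' d'))"
proof (cases "d' c")
  case True
  then show ?thesis using assms by (auto simp: edge_iff)
next
  case False
  then show ?thesis using assms by (auto simp: edge_iff)
qed

theorem mainTheorem7:
  fixes k k' :: nat and d d' :: "nat \<Rightarrow> bool" and s s' :: "nat \<Rightarrow> nat"
  assumes "shrinking k d k' d' s"
    and "shrinking k d k' d' s'"
  shows "homotopic_rel_boundary k d k' d' s s'"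
proof -
  have gs: "good k d k' d' s" and gs': "good k d k' d' s'" using assms shr_good by auto
  have b: "s 0 = 0" "s k = k'" "s' 0 = 0" "s' k = k'" using assms shr_bd by auto
  have bs: "s x \<le> k'" "s' x \<le> k'" if "x \<le> k" for x using gs gs' that by (auto simp: good_def)
  define H where "H i = (if i \<le> k' then (\<lambda>x. max (s x) (min (s' x) i))
      else (\<lambda>x. max (s' x) (min (s x) (2*k' - i))))" for i
  define fs where "fs i = (if i \<le> 2*k' then H i else s')" for i
  have gH: "good k d k' d' (H i)" for i
  proof (cases "i \<le> k'")
    case True
    then show ?thesis unfolding H_def using gs gs' good_max good_min good_const by simp
  next
    case False
    then show ?thesis unfolding H_def using gs gs' good_max good_min good_const by simp
  qed
  have gfs: "good k d k' d' (fs i)" for i using gH gs' by (simp add: fs_def)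
  have bfs: "fs i x = s x" if "x \<in> interval_boundary k" for i x
    using that b by (auto simp: fs_def H_def interval_boundary_def)
  have f0: "fs 0 = s" by (rule ext) (simp add: fs_def H_def)
  have fr: "fs (Suc (2*k')) = s'" by (simp add: fs_def)
  have steps: "(\<forall>x\<in>{0..k}. (fs t x, fs (Suc t) x) \<in> snd (interval k' d')) \<or>
               (\<forall>x\<in>{0..k}. (fs (Suc t) x, fs t x) \<in> snd (interval k' d'))"
    if t: "t < Suc (2*k')" for t
  proof -
    consider "t < k'" | "k' \<le> t" "t < 2*k'" | "t = 2*k'" using t by linarith
    then show ?thesis
    proof cases
      case 1
      have "\<forall>x\<le>k. fs t x \<le> k' \<and> fs (Suc t) x \<le> k' \<and> (fs (Suc t) x = fs t x \<or> (fs t x = t \<and> fs (Suc t) x = Suc t))"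
        using 1 bs by (auto simp: fs_def H_def)
      then show ?thesis by (rule step_up)
    next
      case 2
      have "\<forall>x\<le>k. fs (Suc t) x \<le> k' \<and> fs t x \<le> k' \<and> (fs t x = fs (Suc t) x \<or> (fs (Suc t) x = 2*k' - Suc t \<and> fs t x = Suc (2*k' - Suc t)))"
      proof (intro allI impI)
        fix x assume x: "x \<le> k"
        have e1: "fs t x = max (s' x) (min (s x) (2*k' - t))"
          using 2 bs[OF x] by (auto simp: fs_def H_def)
        have e2: "fs (Suc t) x = max (s' x) (min (s x) (2*k' - Suc t))"
          using 2 bs[OF x] by (auto simp: fs_def H_def)
        show "fs (Suc t) x \<le> k' \<and> fs t x \<le> k' \<and> (fs t x = fs (Suc t) x \<or> (fs (Suc t) x = 2*k' - Suc t \<and> fs t x = Suc (2*k' - Suc t)))"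
          unfolding e1 e2 using 2 bs[OF x] by auto
      qed
      then have "(\<forall>x\<in>{0..k}. (fs (Suc t) x, fs t x) \<in> snd (interval k' d')) \<or>
         (\<forall>x\<in>{0..k}. (fs t x, fs (Suc t) x) \<in> snd (interval k' d'))" by (rule step_up)
      then show ?thesis by blast
    next
      case 3
      have "\<forall>x\<le>k. fs t x \<le> k' \<and> fs (Suc t) x \<le> k' \<and> (fs (Suc t) x = fs t x \<or> (fs t x = 0 \<and> fs (Suc t) x = Suc 0))"
        using 3 bs by (auto simp: fs_def H_def)
      then show ?thesis by (rule step_up)
    qed
  qed
  show ?thesis
    unfolding homotopic_rel_boundary_def
  proof (intro conjI)
    show "\<forall>x\<in>interval_boundary k. s x = s' x" using b by (simp add: interval_boundary_def)
    show "\<exists>(fs :: nat \<Rightarrow> nat \<Rightarrow> nat) r. fs 0 = s \<and> fs r = s' \<and>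
        (\<forall>t\<le>r. digraph_map (interval k d) (interval k' d') (fs t) \<and>
                (\<forall>x\<in>interval_boundary k. fs t x = s x)) \<and>
        (\<forall>t<r. (\<forall>x\<in>{0..k}. (fs t x, fs (Suc t) x) \<in> snd (interval k' d')) \<or>
               (\<forall>x\<in>{0..k}. (fs (Suc t) x, fs t x) \<in> snd (interval k' d')))"
      using f0 fr gfs good_dm bfs steps by blast
  qed
qed

end
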